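(* Let $\Omega_n=\dfrac{\pi^{n/2}}{\Gamma\left(\frac n2+1\right)}$ for $n\in\mathbb{N}_0$. As $n\to\infty$, the following asymptotic series holds: \[ \frac{\Omega_{n-1}}{\Omega_n}=\sqrt{\frac{n}{2\pi}}\left\{\sum_{j=0}^\infty\frac{c_j}{n^j}\right\}, \] where $c_0=1$ and, for $j\in\mathbb{N}$, \[ c_j=\frac1j\sum_{k=1}^j(-1)^k\left[B_{k+1}\left(\tfrac12\right)-B_{k+1}(1)\right]\frac{2^k}{k+1}c_{j-k}, \] $B_m(x)$ denoting the Bernoulli polynomials.
   Context: $\Omega_n$ is the volume of the unit ball in $\mathbb{R}^n$; $\Gamma$ is Euler's gamma function. The Bernoulli polynomials are defined by $\frac{te^{xt}}{e^t-1}=\sum_{m\ge0}B_m(x)\frac{t^m}{m!}$. The series equality is an asymptotic expansion: for every $N$, $\frac{\Omega_{n-1}}{\Omega_n}\sqrt{\frac{2\pi}{n}}-\sum_{j=0}^Nc_jn^{-j}=O(n^{-N-1})$ as $n\to\infty$. *)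

theory Defs
  imports "HOL-Analysis.Analysis" "HOL-Computational_Algebra.Formal_Power_Series"
          "HOL-Library.Landau_Symbols"
begin

definition Omega :: "nat \<Rightarrow> real" where
  "Omega n = pi powr (real n / 2) / Gamma (real n / 2 + 1)"

text \<open>Bernoulli polynomials via the exponential generating function
  t e^{xt} / (e^t - 1) = sum_m B_m(x) t^m / m!  (as a formal power series).\<close>
definition bernpoly :: "nat \<Rightarrow> real \<Rightarrow> real" where
  "bernpoly m x = fact m * fps_nth ((fps_X * fps_exp x) div (fps_exp 1 - 1)) m"

function cc :: "nat \<Rightarrow> real" where
  "cc 0 = 1"
| "cc (Suc j) = (1 / real (Suc j)) *
     (\<Sum>k\<in>{1..Suc j}. (-1) ^ k * (bernpoly (k + 1) (1/2) - bernpoly (k + 1) 1)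
        * 2 ^ k / real (k + 1) * cc (Suc j - k))"
  by pat_completeness auto
termination
  by (relation "Wellfounded.measure id") auto

end

theory Submission
  imports Defs "HOL-Real_Asymp.Real_Asymp"
begin

no_notation vec_nth (infixl \<open>$\<close> 90)
notation fps_nth (infixl \<open>$\<close> 75)

lemma bern_fps_eq:
  fixes x :: real
  shows "((fps_X * fps_exp x) div (fps_exp 1 - 1)) * (fps_exp 1 - 1) = fps_X * fps_exp x"
proof (rule fps_times_divide_eq)
  have "(fps_exp (1::real) - 1) $ 1 \<noteq> 0" by simp
  then show "fps_exp (1::real) - 1 \<noteq> 0" by auto
  have "subdegree (fps_exp (1::real) - 1) \<le> 1"
    by (rule subdegree_leI) simp
  moreover have "subdegree (fps_X * fps_exp x) \<ge> 1"
    by (rule subdegree_geI) auto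
  ultimately show "subdegree (fps_X * fps_exp x) \<ge> subdegree (fps_exp (1::real) - 1)" by simp
qed

lemma bern_sum:
  assumes "M \<ge> 1"
  shows "(\<Sum>i<M. real (M choose i) * bernpoly i x) = real M * x^(M-1)"
proof -
  define B where "B = (fps_X * fps_exp x) div (fps_exp (1::real) - 1)"
  have eq: "(B * (fps_exp 1 - 1)) $ M = (fps_X * fps_exp x) $ M"
    unfolding B_def using bern_fps_eq by simp
  have "(B * (fps_exp 1 - 1)) $ M = (\<Sum>i=0..M. B$i * (fps_exp 1 - 1)$(M-i))"
    by (simp add: fps_mult_nth)
  also have "\<dots> = (\<Sum>i<M. B$i / fact (M-i))"
  proof -
    have "(\<Sum>i=0..M. B$i * (fps_exp (1::real) - 1)$(M-i)) = (\<Sum>i<Suc M. B$i * (fps_exp (1::real) - 1)$(M-i))"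
      by (simp add: atLeast0AtMost lessThan_Suc_atMost)
    also have "\<dots> = (\<Sum>i<M. B$i * (fps_exp (1::real) - 1)$(M-i))"
      by simp
    also have "\<dots> = (\<Sum>i<M. B$i / fact (M-i))"
      by (intro sum.cong refl) (auto simp: fps_exp_def)
    finally show ?thesis .
  qed
  finally have A: "(\<Sum>i<M. B$i / fact (M-i)) = x^(M-1) / fact (M-1)"
    using eq assms by (simp add: fps_exp_def)
  have "(\<Sum>i<M. real (M choose i) * bernpoly i x) = (\<Sum>i<M. fact M * (B$i / fact (M-i)))"
    unfolding bernpoly_def B_def[symmetric]
    by (intro sum.cong refl) (auto simp: binomial_fact field_simps)
  also have "\<dots> = fact M * (\<Sum>i<M. B$i / fact (M-i))"
    by (rule sum_distrib_left[symmetric])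
  also have "\<dots> = fact M * (x^(M-1) / fact (M-1))"
    by (simp only: A)
  also have "\<dots> = real M * x^(M-1)"
    using assms by (cases M) (auto simp: field_simps)
  finally show ?thesis .
qed



definition beta :: "nat \<Rightarrow> real" where "beta i = bernpoly i (1/2) - bernpoly i 1"
definition ee :: "nat \<Rightarrow> real" where
  "ee k = (-1) ^ k * (bernpoly (k + 1) (1/2) - bernpoly (k + 1) 1) * 2 ^ k / real (k + 1)"

lemma bernpoly0: "bernpoly 0 x = 1"
  using bern_sum[of 1 x] by simp

lemma bernpoly1: "bernpoly 1 x = x - 1/2"
  using bern_sum[of 2 x] by (simp add: numeral_2_eq_2 bernpoly0 lessThan_Suc)

lemma beta_sum: "M \<ge> 1 \<Longrightarrow> (\<Sum>i<M. real (M choose i) * beta i) = real M * ((1/2)^(M-1) - 1)"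
  using bern_sum[of M "1/2"] bern_sum[of M 1]
  by (simp add: beta_def sum_subtractf right_diff_distrib power_one_over)

lemma ee_beta: "ee k = (-2)^k * beta (k+1) / real (k+1)"
  by (simp add: ee_def beta_def power_mult_distrib[symmetric])

lemma key_identity:
  "(\<Sum>i<m. ee (i+1) * (-2)^(m-i) * real (Suc m choose Suc i)) = (-2)^m - (-1)^m"
proof -
  have "(\<Sum>i<m. ee (i+1) * (-2)^(m-i) * real (Suc m choose Suc i))
      = (\<Sum>i<m. (-2)^(m+1) / real (m+2) * (real (m+2 choose (i+2)) * beta (i+2)))"
  proof (intro sum.cong refl)
    fix i assume i: "i \<in> {..<m}"
    have b: "real (Suc (Suc m)) * real (Suc m choose Suc i) = real (Suc (Suc m) choose Suc (Suc i)) * real (Suc (Suc i))"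
      using Suc_times_binomial_eq[of "Suc m" "Suc i"] by (metis of_nat_mult)
    have p: "(-2::real)^(i+1) * (-2)^(m-i) = (-2)^(m+1)"
      using i by (simp add: power_add[symmetric])
    have "ee (i+1) * (-2)^(m-i) * real (Suc m choose Suc i)
        = (-2)^(i+1) * (-2)^(m-i) * beta (i+2) * (real (Suc m choose Suc i) / real (i+2))"
      by (simp add: ee_beta field_simps)
    also have "real (Suc m choose Suc i) / real (i+2) = real (Suc (Suc m) choose Suc (Suc i)) / real (m+2)"
      using b by (simp add: field_simps)
    finally show "ee (i+1) * (-2)^(m-i) * real (Suc m choose Suc i)
      = (-2)^(m+1) / real (m+2) * (real (m+2 choose (i+2)) * beta (i+2))"
      using p by (simp add: field_simps)
  qed
  also have "\<dots> = (-2)^(m+1) / real (m+2) * (\<Sum>i<m. real (m+2 choose (i+2)) * beta (i+2))"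
    by (simp add: sum_distrib_left)
  also have "(\<Sum>i<m. real (m+2 choose (i+2)) * beta (i+2))
      = (\<Sum>i<m+2. real (m+2 choose i) * beta i) - beta 0 - real (m+2) * beta 1"
    by (simp add: sum.lessThan_Suc_shift del: sum.lessThan_Suc)
  also have "\<dots> = real (m+2) * ((1/2)^(m+1) - 1) + real (m+2) / 2"
  proof -
    have s: "(\<Sum>i<m+2. real (m+2 choose i) * beta i) = real (m+2) * ((1/2)^(m+1) - 1)"
      using beta_sum[of "m+2"] by simp
    have b0: "beta 0 = 0" and b1: "beta 1 = -1/2"
      by (simp_all add: beta_def bernpoly0 bernpoly1[simplified])
    show ?thesis by (simp only: s b0 b1)
  qed
  finally have F: "(\<Sum>i<m. ee (i+1) * (-2)^(m-i) * real (Suc m choose Suc i))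
     = (-2)^(m+1) / real (m+2) * (real (m+2) * ((1/2)^(m+1) - 1) + real (m+2) / 2)" .
  have h: "(-2::real)^(m+1) * (1/2)^(m+1) = (-1)^(m+1)"
    by (simp add: power_mult_distrib[symmetric])
  have "(-2::real)^(m+1) / real (m+2) * (real (m+2) * ((1/2)^(m+1) - 1) + real (m+2) / 2)
      = (-2)^(m+1) * (1/2)^(m+1) - (-2)^(m+1) / 2"
  proof -
    have g: "\<And>a b r::real. r \<noteq> 0 \<Longrightarrow> a / r * (r*(b-1) + r/2) = a*b - a/2"
      by (simp add: field_simps)
    show ?thesis by (rule g) simp
  qed
  also have "\<dots> = (-2)^m - (-1)^m" by (simp only: h) simp
  finally show ?thesis using F by simp
qed




definition Yp :: "nat \<Rightarrow> real fps" where
  "Yp p = Abs_fps (\<lambda>j. (-2)^j * real (p + j choose j))"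

lemma nth_1p2X: "((1 + 2*fps_X) * G) $ j = (if j = 0 then G $ 0 else G $ j + 2 * G $ (j - 1))"
  for G :: "real fps"
proof -
  have "(1 + 2*fps_X) * G = G + 2 * (fps_X * G)" by (simp add: algebra_simps)
  then show ?thesis by simp
qed

lemma Yp0: "(1 + 2*fps_X) * Yp 0 = 1"
proof (rule fps_ext)
  fix j show "((1 + 2*fps_X) * Yp 0) $ j = (1::real fps) $ j"
    by (cases j) (simp_all add: nth_1p2X Yp_def)
qed

lemma Yp_rec: "(1 + 2*fps_X) * Yp (Suc p) = Yp p"
proof (rule fps_ext)
  fix j show "((1 + 2*fps_X) * Yp (Suc p)) $ j = Yp p $ j"
  proof (cases j)
    case 0 then show ?thesis by (simp add: nth_1p2X Yp_def)
  next
    case (Suc k)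
    have pas: "real (Suc (Suc (p + k)) choose Suc k) = real (Suc (p + k) choose k) + real (Suc (p + k) choose Suc k)"
      by (simp only: binomial_Suc_Suc of_nat_add)
    show ?thesis using Suc pas by (simp add: nth_1p2X Yp_def algebra_simps)
  qed
qed

definition Yf :: "real fps" where "Yf = inverse (1 + 2*fps_X)"
definition Vf :: "real fps" where "Vf = inverse (1 + fps_X)"

lemma Yf_Yp0: "Yf = Yp 0"
  unfolding Yf_def by (rule fps_inverse_unique[OF Yp0])

lemma Yf_mult: "(1 + 2*fps_X) * Yf = 1"
  using Yp0 Yf_Yp0 by simp

lemma Yf_pow: "Yf ^ Suc p = Yp p"
proof (induction p)
  case 0 then show ?case by (simp add: Yf_Yp0)
next
  case (Suc p)
  have "Yf ^ Suc (Suc p) = Yf * Yp p" using Suc by simp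
  also have "\<dots> = Yf * ((1 + 2*fps_X) * Yp (Suc p))" by (simp add: Yp_rec)
  also have "\<dots> = ((1 + 2*fps_X) * Yf) * Yp (Suc p)" by (simp add: algebra_simps)
  also have "\<dots> = Yp (Suc p)" by (simp add: Yf_mult)
  finally show ?case .
qed

lemma Yf_pow_nth: "(Yf ^ Suc p) $ j = (-2)^j * real (p + j choose j)"
  unfolding Yf_pow Yp_def by simp

lemma Yf_nth: "Yf $ j = (-2)^j"
  using Yf_pow_nth[of 0 j] by simp

lemma Vf_nth: "Vf $ j = (-1)^j"
proof -
  have "(1 + fps_X) * Abs_fps (\<lambda>j. (-1::real)^j) = 1"
  proof (rule fps_ext)
    fix j show "((1 + fps_X) * Abs_fps (\<lambda>j. (-1::real)^j)) $ j = (1::real fps) $ j"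
    proof -
      have "(1 + fps_X) * Abs_fps (\<lambda>j. (-1::real)^j) = Abs_fps (\<lambda>j. (-1::real)^j) + fps_X * Abs_fps (\<lambda>j. (-1::real)^j)"
        by (simp add: algebra_simps)
      then show ?thesis by (cases j) simp_all
    qed
  qed
  then have "Vf = Abs_fps (\<lambda>j. (-1::real)^j)" unfolding Vf_def by (rule fps_inverse_unique)
  then have "Vf $ j = Abs_fps (\<lambda>j. (-1::real)^j) $ j" by (rule arg_cong)
  then show ?thesis by (simp only: fps_nth_Abs_fps)
qed

definition Phi :: "real fps" where "Phi = fps_X * Yf"

lemma Phi0: "Phi $ 0 = 0" by (simp add: Phi_def)

lemma Yf_deriv: "fps_deriv Yf = - 2 * Yf^2"
  unfolding Yf_def by (subst fps_inverse_deriv) simp_all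

lemma Phi_deriv: "fps_deriv Phi = Yf^2"
proof -
  have "fps_deriv Phi = Yf - 2 * fps_X * Yf^2" by (simp add: Phi_def Yf_deriv algebra_simps)
  also have "\<dots> = ((1 + 2*fps_X) * Yf) * Yf - 2 * fps_X * Yf^2" by (simp add: Yf_mult)
  also have "\<dots> = Yf^2" by (simp add: algebra_simps power2_eq_square)
  finally show ?thesis .
qed

lemma pow_below: "b $ 0 = 0 \<Longrightarrow> s < i \<Longrightarrow> (b ^ i) $ s = (0::real)"
proof (cases "b = 0")
  case False
  assume "b $ 0 = 0" "s < i"
  then have "subdegree b \<ge> 1" using False by (intro subdegree_geI) auto
  then have "s < i * subdegree b" using \<open>s < i\<close>
    by (metis less_le_trans mult.right_neutral mult_le_mono2)
  then show ?thesis by (rule fps_pow_nth_below_subdegree)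
next
  case True
  assume "s < i"
  then show ?thesis using True by (cases i) auto
qed

lemma comp_mult_nth:
  fixes a b H :: "real fps"
  assumes b0: "b $ 0 = 0"
  shows "((a oo b) * H) $ m = (\<Sum>i\<le>m. a $ i * (b ^ i * H) $ m)"
proof -
  have "((a oo b) * H) $ m = (\<Sum>s\<le>m. (\<Sum>i\<le>s. a$i * (b^i)$s) * H$(m-s))"
    by (simp add: fps_mult_nth fps_compose_nth atLeast0AtMost)
  also have "\<dots> = (\<Sum>s\<le>m. \<Sum>i\<le>m. a$i * (b^i)$s * H$(m-s))"
  proof (intro sum.cong refl)
    fix s assume s: "s \<in> {..m}"
    have "(\<Sum>i\<le>m. a$i * (b^i)$s * H$(m-s)) = (\<Sum>i\<le>s. a$i * (b^i)$s * H$(m-s))"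
      using s by (intro sum.mono_neutral_right) (auto simp: pow_below[OF b0])
    then show "(\<Sum>i\<le>s. a$i * (b^i)$s) * H$(m-s) = (\<Sum>i\<le>m. a$i * (b^i)$s * H$(m-s))"
      by (simp add: sum_distrib_right)
  qed
  also have "\<dots> = (\<Sum>i\<le>m. \<Sum>s\<le>m. a$i * (b^i)$s * H$(m-s))"
    by (rule sum.swap)
  also have "\<dots> = (\<Sum>i\<le>m. a $ i * (b ^ i * H) $ m)"
    by (simp add: fps_mult_nth atLeast0AtMost sum_distrib_left mult.assoc)
  finally show ?thesis .
qed

definition CF :: "real fps" where "CF = Abs_fps cc"
definition MF :: "real fps" where "MF = Abs_fps (\<lambda>i. ee (i+1))"
definition RF :: "real fps" where "RF = Yf - Vf"

lemma M1: "(MF oo Phi) * Yf^2 = MF + RF"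
proof (rule fps_ext)
  fix m
  have "((MF oo Phi) * Yf^2) $ m = (\<Sum>i\<le>m. ee (i+1) * (Phi ^ i * Yf^2) $ m)"
    by (simp add: comp_mult_nth[OF Phi0] MF_def)
  also have "\<dots> = (\<Sum>i\<le>m. ee (i+1) * ((-2)^(m-i) * real (Suc m choose Suc i)))"
  proof (intro sum.cong refl)
    fix i assume i: "i \<in> {..m}"
    have "Phi ^ i * Yf^2 = fps_X ^ i * Yf ^ Suc (Suc i)"
      by (simp add: Phi_def power_mult_distrib algebra_simps power2_eq_square)
    then have "(Phi ^ i * Yf^2) $ m = (-2)^(m-i) * real (Suc i + (m - i) choose (m-i))"
      using i by (simp add: fps_X_power_mult_nth Yf_pow_nth del: power_Suc)
    also have "Suc i + (m - i) = Suc m" using i by simp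
    also have "real (Suc m choose (m-i)) = real (Suc m choose Suc i)"
      using i by (subst binomial_symmetric) (auto simp: Suc_diff_le)
    finally show "ee (i+1) * (Phi ^ i * Yf^2) $ m = ee (i+1) * ((-2)^(m-i) * real (Suc m choose Suc i))"
      by simp
  qed
  also have "\<dots> = (\<Sum>i<m. ee (i+1) * (-2)^(m-i) * real (Suc m choose Suc i)) + ee (m+1)"
    by (simp add: lessThan_Suc_atMost[symmetric] mult.assoc)
  also have "\<dots> = (MF + RF) $ m"
    using key_identity[of m] by (simp add: MF_def RF_def Yf_nth Vf_nth del: binomial_Suc_Suc)
  finally show "((MF oo Phi) * Yf^2) $ m = (MF + RF) $ m" .
qed



lemma cc_Suc: "cc (Suc j) = 1 / real (Suc j) * (\<Sum>k\<in>{1..Suc j}. ee k * cc (Suc j - k))"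
  by (simp add: ee_def)

lemma CF_deriv: "fps_deriv CF = CF * MF"
proof (rule fps_ext)
  fix n
  have "fps_deriv CF $ n = real (Suc n) * cc (Suc n)" by (simp add: CF_def)
  also have "\<dots> = (\<Sum>k\<in>{1..Suc n}. ee k * cc (Suc n - k))"
    by (subst cc_Suc) simp
  also have "\<dots> = (\<Sum>i\<in>{0..n}. cc i * ee (n - i + 1))"
    by (rule sum.reindex_bij_witness[of _ "\<lambda>i. Suc n - i" "\<lambda>k. Suc n - k"]) auto
  also have "\<dots> = (CF * MF) $ n" by (simp add: fps_mult_nth CF_def MF_def)
  finally show "fps_deriv CF $ n = (CF * MF) $ n" .
qed

definition DF :: "real fps" where "DF = CF * CF"

lemma DF_deriv: "fps_deriv DF = DF * (MF + MF)"
  by (simp add: DF_def CF_deriv algebra_simps)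

lemma DF0: "DF $ 0 = 1" by (simp add: DF_def CF_def)

lemma ode_unique:
  fixes A B K :: "real fps"
  assumes "fps_deriv A = A * K" "fps_deriv B = B * K" "A $ 0 = B $ 0"
  shows "A = B"
proof -
  have "\<forall>j\<le>n. A $ j = B $ j" for n
  proof (induction n)
    case 0 then show ?case using assms(3) by simp
  next
    case (Suc n)
    have "real (Suc n) * A $ Suc n = fps_deriv A $ n" by simp
    also have "\<dots> = (\<Sum>i=0..n. A$i * K$(n-i))" by (simp add: assms(1) fps_mult_nth)
    also have "\<dots> = (\<Sum>i=0..n. B$i * K$(n-i))" using Suc.IH by (intro sum.cong refl) auto
    also have "\<dots> = fps_deriv B $ n" by (simp add: assms(2) fps_mult_nth)
    also have "\<dots> = real (Suc n) * B $ Suc n" by simp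
    finally have "A $ Suc n = B $ Suc n" by simp
    then show ?case using Suc.IH le_Suc_eq by auto
  qed
  then show ?thesis by (intro fps_ext) auto
qed

definition WF :: "real fps" where "WF = (1 + 2*fps_X) * Vf^2"

lemma Vf_mult: "(1 + fps_X) * Vf = 1"
  unfolding Vf_def by (rule inverse_mult_eq_1') simp

lemma Vf_deriv: "fps_deriv Vf = - (Vf^2)"
  unfolding Vf_def by (subst fps_inverse_deriv) simp_all

lemma WF_deriv: "fps_deriv WF = WF * (RF + RF)"
proof -
  have "fps_deriv WF = 2*Vf^2 - 2*(1+2*fps_X)*Vf^3"
    by (simp add: WF_def Vf_deriv algebra_simps power2_eq_square power3_eq_cube)
  also have "\<dots> = 2*Vf^2*((1+2*fps_X)*Yf) - 2*(1+2*fps_X)*Vf^3"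
    by (simp add: Yf_mult)
  also have "\<dots> = WF * (RF + RF)"
    by (simp add: WF_def RF_def algebra_simps power2_eq_square power3_eq_cube)
  finally show ?thesis .
qed

lemma WF0: "WF $ 0 = 1"
  by (simp add: WF_def Vf_nth fps_power_zeroth)

lemma main_formal: "DF oo Phi = WF * DF"
proof (rule ode_unique[where K = "(MF + RF) + (MF + RF)"])
  have "fps_deriv (DF oo Phi) = (fps_deriv DF oo Phi) * Yf^2"
    by (simp add: fps_compose_deriv Phi0 Phi_deriv)
  also have "\<dots> = (DF oo Phi) * ((MF oo Phi) * Yf^2 + (MF oo Phi) * Yf^2)"
    by (simp add: DF_deriv fps_compose_mult_distrib[OF Phi0] fps_compose_add_distrib algebra_simps)
  also have "\<dots> = (DF oo Phi) * ((MF + RF) + (MF + RF))" by (simp add: M1)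
  finally show "fps_deriv (DF oo Phi) = (DF oo Phi) * ((MF + RF) + (MF + RF))" .
  show "fps_deriv (WF * DF) = (WF * DF) * ((MF + RF) + (MF + RF))"
    by (simp add: DF_deriv WF_deriv algebra_simps)
  show "(DF oo Phi) $ 0 = (WF * DF) $ 0" by (simp add: DF0 WF0)
qed



lemma fps_X_pow_shift: "(\<forall>m<M. H $ m = 0) \<Longrightarrow> H = fps_X ^ M * fps_shift M H"
  for H :: "real fps"
  by (intro fps_ext) (auto simp: fps_X_power_mult_nth)

lemma inv_nat_tendsto: "((\<lambda>n::nat. 1 / real n) \<longlongrightarrow> (0::real)) sequentially"
  by real_asymp

lemma ev_inv_nat:
  assumes "eventually P (nhds (0::real))"
  shows "eventually (\<lambda>n::nat. P (1 / real n)) sequentially"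
proof -
  have "filterlim (\<lambda>n::nat. 1/real n) (nhds 0) sequentially" by (rule inv_nat_tendsto)
  then show ?thesis using assms unfolding filterlim_iff by blast
qed
  
lemma fps_bigo:
  fixes h :: "real \<Rightarrow> real" and H :: "real fps"
  assumes hH: "h has_fps_expansion H" and z: "\<forall>m<M. H $ m = 0"
  shows "(\<lambda>n::nat. h (1 / real n)) \<in> O(\<lambda>n. 1 / real n ^ M)"
proof -
  define S where "S = fps_shift M H"
  have rad: "fps_conv_radius H > 0" and ev: "eventually (\<lambda>z. eval_fps H z = h z) (nhds 0)"
    using hH by (auto simp: has_fps_expansion_def)
  have radS: "fps_conv_radius S > 0" using rad by (simp add: S_def)
  have HS: "H = fps_X ^ M * S" unfolding S_def by (rule fps_X_pow_shift[OF z])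
  have ev1: "eventually (\<lambda>z. z \<in> eball 0 (fps_conv_radius S)) (nhds (0::real))"
    using radS by (intro eventually_nhds_in_open) (auto simp: zero_ereal_def)
  have "isCont (eval_fps S) 0"
    using radS by (intro continuous_eval_fps) (auto simp: zero_ereal_def)
  then have "eventually (\<lambda>z. dist (eval_fps S z) (eval_fps S 0) < 1) (at 0)"
    unfolding isCont_def by (rule tendstoD) simp
  then have ev2: "eventually (\<lambda>z. dist (eval_fps S z) (eval_fps S 0) < 1) (nhds (0::real))"
    unfolding eventually_at_filter by eventually_elim auto
  define K where "K = abs (eval_fps S 0) + 1"
  have "eventually (\<lambda>z. abs (h z) \<le> K * abs (z ^ M)) (nhds (0::real))"
    using ev ev1 ev2
  proof eventually_elim
    case (elim z)
    have "h z = eval_fps (fps_X ^ M * S) z" using elim HS by simp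
    also have "\<dots> = z ^ M * eval_fps S z"
      using elim by (subst eval_fps_mult) auto
    finally have "abs (h z) = abs (z ^ M) * abs (eval_fps S z)" by (simp add: abs_mult)
    also have "\<dots> \<le> abs (z ^ M) * K"
      using elim by (intro mult_left_mono) (auto simp: K_def dist_real_def)
    finally show ?case by (simp add: mult.commute)
  qed
  from ev_inv_nat[OF this]
  have "eventually (\<lambda>n::nat. norm (h (1 / real n)) \<le> K * norm (1 / real n ^ M)) sequentially"
    by (simp add: power_one_over)
  then show ?thesis by (rule bigoI)
qed



lemma has_fps_expansion_power':
  fixes F :: "real fps"
  assumes "f has_fps_expansion F"
  shows "(\<lambda>x. f x ^ n) has_fps_expansion F ^ n"
proof (induction n)
  case 0 then show ?case by simp
next
  case (Suc n)
  have "(\<lambda>x. f x * f x ^ n) has_fps_expansion F * F ^ n"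
    by (intro has_fps_expansion_mult assms Suc)
  then show ?case by simp
qed

definition trunc :: "nat \<Rightarrow> (nat \<Rightarrow> real) \<Rightarrow> real fps" where
  "trunc N a = Abs_fps (\<lambda>i. if i \<le> N then a i else 0)"

lemma poly_exp: "(\<lambda>t::real. \<Sum>j\<le>N. a j * t^j) has_fps_expansion trunc N a"
proof -
  have "(\<lambda>t::real. \<Sum>j\<le>N. a j * t^j) has_fps_expansion (\<Sum>j\<le>N. fps_const (a j) * fps_X ^ j)"
    by (intro has_fps_expansion_sum has_fps_expansion_cmult_left has_fps_expansion_fps_X_power)
  also have "(\<Sum>j\<le>N. fps_const (a j) * fps_X ^ j) = trunc N a"
  proof (rule fps_ext)
    fix m
    have "(\<Sum>j\<le>N. fps_const (a j) * fps_X ^ j) $ m = (\<Sum>j\<le>N. (fps_const (a j) * fps_X ^ j) $ m)"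
      by (rule fps_sum_nth)
    also have "\<dots> = (\<Sum>j\<le>N. if j = m then a j else 0)"
      by (intro sum.cong refl) (simp add: fps_X_power_nth)
    also have "\<dots> = (if m \<le> N then a m else 0)" by (simp add: sum.delta')
    also have "\<dots> = trunc N a $ m" by (simp add: trunc_def)
    finally show "(\<Sum>j\<le>N. fps_const (a j) * fps_X ^ j) $ m = trunc N a $ m" .
  qed
  finally show ?thesis .
qed

lemma lin_exp: "(\<lambda>t::real. 1 + c * t) has_fps_expansion (1 + fps_const c * fps_X)"
  by (intro has_fps_expansion_add has_fps_expansion_1 has_fps_expansion_cmult_left has_fps_expansion_fps_X)

lemma Vf_exp: "(\<lambda>t::real. inverse (1 + t)) has_fps_expansion Vf"
proof -
  have "(\<lambda>t::real. inverse (1 + 1 * t)) has_fps_expansion inverse (1 + fps_const 1 * fps_X)"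
    by (intro has_fps_expansion_inverse lin_exp) simp
  then show ?thesis by (simp add: Vf_def)
qed

lemma Yf_exp: "(\<lambda>t::real. inverse (1 + 2 * t)) has_fps_expansion Yf"
proof -
  have "(\<lambda>t::real. inverse (1 + 2 * t)) has_fps_expansion inverse (1 + fps_const 2 * fps_X)"
    by (intro has_fps_expansion_inverse lin_exp) simp
  then show ?thesis by (simp add: Yf_def numeral_fps_const)
qed

definition ww :: "real \<Rightarrow> real" where "ww t = (1 + 2 * t) * inverse (1 + t) ^ 2"
definition phi :: "real \<Rightarrow> real" where "phi t = t * inverse (1 + 2 * t)"

lemma ww_exp: "ww has_fps_expansion WF"
proof -
  have "(\<lambda>t::real. (1 + 2 * t) * inverse (1 + t) ^ 2) has_fps_expansion (1 + fps_const 2 * fps_X) * Vf ^ 2"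
    by (intro has_fps_expansion_mult lin_exp has_fps_expansion_power' Vf_exp)
  moreover have "ww = (\<lambda>t::real. (1 + 2 * t) * inverse (1 + t) ^ 2)" by (simp add: fun_eq_iff ww_def)
  ultimately show ?thesis unfolding WF_def by (simp add: numeral_fps_const)
qed

lemma phi_exp: "phi has_fps_expansion Phi"
proof -
  have "(\<lambda>t::real. t * inverse (1 + 2 * t)) has_fps_expansion fps_X * Yf"
    by (intro has_fps_expansion_mult has_fps_expansion_fps_X Yf_exp)
  moreover have "phi = (\<lambda>t::real. t * inverse (1 + 2 * t))" by (simp add: fun_eq_iff phi_def)
  ultimately show ?thesis unfolding Phi_def by simp
qed

definition dd :: "nat \<Rightarrow> real" where "dd j = DF $ j"

definition hh :: "nat \<Rightarrow> real \<Rightarrow> real" where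
  "hh N t = ww t * (\<Sum>j\<le>N. dd j * t^j) - (\<Sum>j\<le>N. dd j * phi t ^ j)"

lemma hh_exp: "hh N has_fps_expansion (WF * trunc N dd - (\<Sum>j\<le>N. fps_const (dd j) * Phi ^ j))"
  unfolding hh_def
  by (intro has_fps_expansion_diff has_fps_expansion_mult ww_exp poly_exp has_fps_expansion_sum
        has_fps_expansion_cmult_left has_fps_expansion_power' phi_exp)

lemma PN_nth: "(\<Sum>j\<le>N. fps_const (dd j) * Phi ^ j) $ m = (trunc N dd oo Phi) $ m"
proof -
  have "(\<Sum>j\<le>N. fps_const (dd j) * Phi ^ j) $ m = (\<Sum>j\<le>N. dd j * (Phi ^ j) $ m)"
    by (simp add: fps_sum_nth)
  also have "\<dots> = (\<Sum>j\<le>N+m. (if j \<le> N then dd j else 0) * (Phi ^ j) $ m)"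
    by (intro sum.mono_neutral_cong_left) auto
  also have "\<dots> = (\<Sum>j\<le>m. (if j \<le> N then dd j else 0) * (Phi ^ j) $ m)"
    by (intro sum.mono_neutral_cong_right) (auto simp: pow_below[OF Phi0])
  also have "\<dots> = (trunc N dd oo Phi) $ m"
    by (simp add: fps_compose_nth trunc_def atLeast0AtMost)
  finally show ?thesis .
qed

lemma Phi_pow_diag: "(Phi ^ m) $ m = 1"
proof -
  have "Phi ^ m = fps_X ^ m * Yf ^ m" by (simp add: Phi_def power_mult_distrib)
  then show ?thesis by (simp add: fps_X_power_mult_nth fps_power_zeroth Yf_nth)
qed

lemma tail_lemma:
  fixes T :: "real fps"
  assumes T: "\<And>i. i \<le> N \<Longrightarrow> T $ i = 0" and m: "m \<le> Suc N"
  shows "(WF * T) $ m = T $ m" "(T oo Phi) $ m = T $ m"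
proof -
  have "(WF * T) $ m = (\<Sum>i\<in>{0..m}. WF $ i * T $ (m - i))" by (simp add: fps_mult_nth)
  also have "\<dots> = (\<Sum>i\<in>{0}. WF $ i * T $ (m - i))"
    using T m by (intro sum.mono_neutral_right) auto
  finally show "(WF * T) $ m = T $ m" by (simp add: WF0)
  have "(T oo Phi) $ m = (\<Sum>j\<in>{0..m}. T $ j * (Phi ^ j) $ m)" by (simp add: fps_compose_nth)
  also have "\<dots> = (\<Sum>j\<in>{m}. T $ j * (Phi ^ j) $ m)"
    using T m by (intro sum.mono_neutral_right) auto
  finally show "(T oo Phi) $ m = T $ m" by (simp add: Phi_pow_diag)
qed

lemma hh_coeffs: "\<forall>m < N + 2. (WF * trunc N dd - (\<Sum>j\<le>N. fps_const (dd j) * Phi ^ j)) $ m = 0"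
proof (intro allI impI)
  fix m assume m: "m < N + 2"
  define T where "T = DF - trunc N dd"
  have T0: "T $ i = 0" if "i \<le> N" for i using that by (simp add: T_def trunc_def dd_def)
  have "WF * trunc N dd - (trunc N dd oo Phi) = (WF * DF - (DF oo Phi)) - (WF * T - (T oo Phi))"
    by (simp add: T_def fps_compose_sub_distrib algebra_simps)
  also have "\<dots> = - (WF * T - (T oo Phi))" by (simp add: main_formal)
  finally have e: "WF * trunc N dd - (trunc N dd oo Phi) = - (WF * T - (T oo Phi))" .
  have "(WF * trunc N dd - (\<Sum>j\<le>N. fps_const (dd j) * Phi ^ j)) $ m
      = (WF * trunc N dd - (trunc N dd oo Phi)) $ m" by (simp add: PN_nth)
  also have "\<dots> = 0" unfolding e using tail_lemma[of N T m] T0 m by simp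
  finally show "(WF * trunc N dd - (\<Sum>j\<le>N. fps_const (dd j) * Phi ^ j)) $ m = 0" .
qed

lemma hh_bigo: "(\<lambda>n::nat. hh N (1 / real n)) \<in> O(\<lambda>n. 1 / real n ^ (N + 2))"
  by (rule fps_bigo[OF hh_exp hh_coeffs])



definition fN :: "nat \<Rightarrow> real" where
  "fN n = Omega (n - 1) / Omega n * sqrt (2 * pi / real n)"
definition GG :: "real \<Rightarrow> real" where
  "GG x = Gamma (x + 1) / (Gamma (x + 1/2) * sqrt x)"

lemma Gp1: "x > 0 \<Longrightarrow> Gamma (x + 1) = x * Gamma (x::real)"
  by (rule Gamma_plus1) (auto dest: nonpos_Ints_nonpos)

lemma aux_fN:
  fixes P s A B q :: real
  assumes "P \<noteq> 0" "s \<noteq> 0" "A \<noteq> 0" "B \<noteq> 0" "q \<noteq> 0"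
  shows "P / s / A / (P / B) * (s / q) = B / (A * q)"
  using assms by (simp add: field_simps)

lemma fN_eq:
  assumes n: "n \<ge> 1"
  shows "fN n = GG (real n / 2)"
proof -
  define x where "x = real n / 2"
  have x: "x > 0" using n by (simp add: x_def)
  have h2: "real (n - 1) / 2 = x - 1/2" using n by (simp add: x_def of_nat_diff field_simps)
  have h3: "x - 1/2 + 1 = x + 1/2" by simp
  have O1: "Omega (n - 1) = pi powr (x - 1/2) / Gamma (x + 1/2)"
    unfolding Omega_def h2 h3 by (rule refl)
  have O2: "Omega n = pi powr x / Gamma (x + 1)" by (simp add: Omega_def x_def)
  have pw: "pi powr (x - 1/2) = pi powr x / sqrt pi"
    by (simp add: powr_diff powr_half_sqrt)
  have sq: "sqrt (2 * pi / real n) = sqrt pi / sqrt x"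
    by (simp add: x_def real_sqrt_divide real_sqrt_mult field_simps)
  have g1: "Gamma (x + 1) > 0" "Gamma (x + 1/2) > 0" using x by auto
  have pp: "pi powr x > 0" by simp
  show ?thesis unfolding fN_def O1 O2 pw sq GG_def x_def[symmetric]
  proof (rule aux_fN)
    show "Gamma (x + 1/2) \<noteq> 0" using g1(2) by linarith
    show "Gamma (x + 1) \<noteq> 0" using g1(1) by linarith
  qed (use pp x in auto)
qed

lemma GG_pos: "x > 0 \<Longrightarrow> GG x > 0"
  by (simp add: GG_def)

lemma aux_step:
  fixes A B x :: real
  assumes "A > 0" "B > 0" "x > 0"
  shows "((x+1)*A/((x+1/2)*B * sqrt(x+1)))^2 = (A/(B * sqrt x))^2 * (x*(x+1)/(x+1/2)^2)"
proof -
  have e: "sqrt (x+1) ^ 2 = x + 1" "sqrt x ^ 2 = x" using assms by simp_all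
  have nz: "x + 1 \<noteq> 0" "x + 1/2 \<noteq> 0" "B \<noteq> 0" "x \<noteq> 0" using assms by auto
  have "((x+1)*A/((x+1/2)*B * sqrt(x+1)))^2 = (x+1)^2*A^2/((x+1/2)^2*B^2* sqrt(x+1)^2)"
    by (simp add: power_divide power_mult_distrib)
  also have "\<dots> = (x+1)^2*A^2/((x+1/2)^2*B^2*(x+1))" unfolding e ..
  also have "\<dots> = ((x+1)*A^2)/((x+1/2)^2*B^2)"
  proof -
    have "(x+1)^2*A^2 = ((x+1)*A^2)*(x+1)" by (simp add: power2_eq_square)
    then show ?thesis by (simp only:) (rule nonzero_mult_divide_mult_cancel_right[OF nz(1)])
  qed
  finally have L: "((x+1)*A/((x+1/2)*B * sqrt(x+1)))^2 = ((x+1)*A^2)/((x+1/2)^2*B^2)" .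
  have "(A/(B * sqrt x))^2 * (x*(x+1)/(x+1/2)^2) = A^2/(B^2* sqrt x^2) * (x*(x+1)/(x+1/2)^2)"
    by (simp add: power_divide power_mult_distrib)
  also have "\<dots> = A^2/(B^2*x) * (x*(x+1)/(x+1/2)^2)" unfolding e ..
  also have "\<dots> = (((x+1)*A^2) * x)/(((x+1/2)^2*B^2)*x)"
    by (simp only: times_divide_times_eq) (simp add: ac_simps)
  also have "\<dots> = ((x+1)*A^2)/((x+1/2)^2*B^2)"
    by (rule nonzero_mult_divide_mult_cancel_right[OF nz(4)])
  finally show ?thesis using L by simp
qed

lemma GG_step:
  assumes x: "x > 0"
  shows "GG (x + 1) ^ 2 = GG x ^ 2 * (x * (x + 1) / (x + 1/2)^2)"
proof -
  have a: "Gamma (x + 1 + 1) = (x + 1) * Gamma (x + 1)" using x by (intro Gp1) simp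
  have b0: "x + 1 + 1/2 = (x + 1/2) + 1" by simp
  have b: "Gamma (x + 1 + 1/2) = (x + 1/2) * Gamma (x + 1/2)"
    unfolding b0 using x by (intro Gp1) simp
  have g: "Gamma (x + 1) > 0" "Gamma (x + 1/2) > 0" using x by auto
  show ?thesis unfolding GG_def a b
    using x g by (intro aux_step) auto
qed

lemma lnGamma_mid:
  assumes "a > 0" "b > (0::real)"
  shows "Gamma ((a + b) / 2) ^ 2 \<le> Gamma a * Gamma b"
proof -
  define m where "m = (a + b) / 2"
  have m0: "m > 0" using assms by (simp add: m_def)
  have "(ln \<circ> Gamma) ((1 - 1/2) *\<^sub>R a + (1/2) *\<^sub>R b) \<le> (1 - 1/2) * (ln \<circ> Gamma) a + (1/2) * (ln \<circ> Gamma) b"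
    using assms by (intro convex_onD[OF log_convex_Gamma_real]) auto
  moreover have "(1 - 1/2) *\<^sub>R a + (1/2) *\<^sub>R b = m" by (simp add: m_def)
  ultimately have "ln (Gamma m) \<le> (1/2) * ln (Gamma a) + (1/2) * ln (Gamma b)" by simp
  then have "2 * ln (Gamma m) \<le> ln (Gamma a) + ln (Gamma b)" by simp
  moreover have "Gamma m > 0" "Gamma a > 0" "Gamma b > 0" using assms m0 by auto
  ultimately have "ln (Gamma m ^ 2) \<le> ln (Gamma a * Gamma b)"
    by (simp add: ln_mult ln_realpow)
  then show ?thesis using \<open>Gamma m > 0\<close> \<open>Gamma a > 0\<close> \<open>Gamma b > 0\<close> m_def by simp
qed

lemma aux_b1:
  fixes A B C x :: real
  assumes "x > 0" "B > 0" "A = x * C" "B^2 \<le> C * A"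
  shows "1 \<le> A^2 / (B^2 * x)"
proof -
  have "B^2 * x \<le> A^2" using assms by (simp add: power2_eq_square mult_right_mono algebra_simps)
  then show ?thesis using assms by (simp add: field_simps)
qed

lemma aux_b2:
  fixes A B D x :: real
  assumes "x > 0" "B > 0" "D = (x + 1/2) * B" "A^2 \<le> B * D"
  shows "A^2 / (B^2 * x) \<le> (x + 1/2) / x"
proof -
  have "A^2 \<le> (x + 1/2) * B^2" using assms by (simp add: power2_eq_square algebra_simps)
  then have "A^2 / (B^2 * x) \<le> ((x + 1/2) * B^2) / (B^2 * x)"
    using assms by (intro divide_right_mono) auto
  also have "\<dots> = (x + 1/2) / x" using assms by simp
  finally show ?thesis .
qed

lemma GG_bounds:
  assumes x: "x > 0"
  shows "1 \<le> GG x ^ 2" "GG x ^ 2 \<le> (x + 1/2) / x"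
proof -
  have g: "Gamma x > 0" "Gamma (x + 1) > 0" "Gamma (x + 1/2) > 0" "Gamma (x + 3/2) > 0" using x by auto
  have e1: "Gamma (x + 1) = x * Gamma x" using x by (rule Gp1)
  have e2: "Gamma (x + 3/2) = (x + 1/2) * Gamma (x + 1/2)"
  proof -
    have "x + 3/2 = (x + 1/2) + 1" by simp
    then show ?thesis using x by (simp only:) (intro Gp1, simp)
  qed
  have q1: "(x + (x + 1)) / 2 = x + 1/2" by simp
  have q2: "((x + 1/2) + (x + 3/2)) / 2 = x + 1" by simp
  have i1: "Gamma (x + 1/2) ^ 2 \<le> Gamma x * Gamma (x + 1)"
    using lnGamma_mid[of x "x + 1", unfolded q1] x by simp
  have i2: "Gamma (x + 1) ^ 2 \<le> Gamma (x + 1/2) * Gamma (x + 3/2)"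
    using lnGamma_mid[of "x + 1/2" "x + 3/2", unfolded q2] x by simp
  have G2: "GG x ^ 2 = Gamma (x + 1) ^ 2 / (Gamma (x + 1/2) ^ 2 * x)"
    using x by (simp add: GG_def power_mult_distrib power_divide)
  show "1 \<le> GG x ^ 2" unfolding G2 using x g(3) e1 i1 by (rule aux_b1)
  show "GG x ^ 2 \<le> (x + 1/2) / x" unfolding G2 using x g(3) e2 i2 by (rule aux_b2)
qed

definition FF :: "nat \<Rightarrow> real" where "FF n = fN n ^ 2"

lemma FF_step:
  assumes n: "n \<ge> 1"
  shows "FF (n + 2) = FF n * (real n * (real n + 2) / (real n + 1)^2)"
proof -
  have "fN (n + 2) = GG (real (n + 2) / 2)" by (rule fN_eq) simp
  also have "real (n + 2) / 2 = real n / 2 + 1" by simp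
  finally have "FF (n + 2) = GG (real n / 2 + 1) ^ 2" by (simp add: FF_def)
  also have "\<dots> = GG (real n / 2) ^ 2 * ((real n / 2) * (real n / 2 + 1) / (real n / 2 + 1/2)^2)"
    using n by (intro GG_step) simp
  also have "(real n / 2) * (real n / 2 + 1) / (real n / 2 + 1/2)^2 = real n * (real n + 2) / (real n + 1)^2"
  proof -
    have a: "(real n / 2) * (real n / 2 + 1) = (real n * (real n + 2)) / 4" by (simp add: field_simps)
    have b: "(real n / 2 + 1/2)^2 = (real n + 1)^2 / 4" by (simp add: field_simps power2_eq_square)
    show ?thesis unfolding a b by simp
  qed
  finally show ?thesis using n by (simp add: FF_def fN_eq)
qed

lemma FF_lim: "FF \<longlonglongrightarrow> 1"
proof (rule tendsto_sandwich[where f = "\<lambda>_. 1" and h = "\<lambda>n. 1 + 1 / real n"])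
  show "eventually (\<lambda>n. 1 \<le> FF n) sequentially"
    using eventually_ge_at_top[of 1]
    by eventually_elim (use GG_bounds in \<open>auto simp: FF_def fN_eq\<close>)
  show "eventually (\<lambda>n. FF n \<le> 1 + 1 / real n) sequentially"
    using eventually_ge_at_top[of 1]
  proof eventually_elim
    case (elim n)
    have "FF n \<le> (real n / 2 + 1/2) / (real n / 2)"
      using elim GG_bounds(2)[of "real n / 2"] by (simp add: FF_def fN_eq)
    also have "\<dots> = 1 + 1 / real n" using elim by (simp add: field_simps)
    finally show ?case .
  qed
  show "(\<lambda>n. 1 + 1 / real n) \<longlonglongrightarrow> 1" by real_asymp
qed simp

lemma fN_pos: "n \<ge> 1 \<Longrightarrow> fN n > 0"
  by (simp add: fN_eq GG_pos)

lemma fN_lim: "fN \<longlonglongrightarrow> 1"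
proof -
  have "(\<lambda>n. sqrt (FF n)) \<longlonglongrightarrow> sqrt 1" by (intro tendsto_real_sqrt FF_lim)
  moreover have "eventually (\<lambda>n. sqrt (FF n) = fN n) sequentially"
    using eventually_ge_at_top[of 1]
    by eventually_elim (auto simp: FF_def fN_pos less_imp_le)
  ultimately show ?thesis by (simp add: tendsto_cong)
qed



lemma aux_lin: "2/3 * a \<le> b \<Longrightarrow> a \<le> 3/2 * (b::real)" by linarith

lemma tele_ineq:
  assumes n: "n \<ge> (1::nat)"
  shows "1 / real n ^ (p+2) \<le> 3/2 * (1 / real n ^ (p+1) - 1 / (real n + 2) ^ (p+1))"
proof -
  define x where "x = real n"
  have x: "x \<ge> 1" using n by (simp add: x_def)
  note x_def[symmetric, simp]
  define a where "a = x / (x + 2)"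
  have a0: "0 \<le> a" "a \<le> 1" using x by (auto simp: a_def)
  have "a ^ (p+1) = a * a ^ p" by simp
  also have "\<dots> \<le> a * 1" using a0 by (intro mult_left_mono power_le_one) auto
  finally have ap: "a ^ (p+1) \<le> a" by simp
  have u2: "1 / (x+2) ^ (p+1) = 1 / x ^ (p+1) * a ^ (p+1)"
    using x by (simp add: a_def power_divide)
  have "1 / x ^ (p+1) - 1 / (x+2) ^ (p+1) = 1 / x ^ (p+1) * (1 - a ^ (p+1))"
    unfolding u2 by (simp only: right_diff_distrib mult_1_right)
  also have "\<dots> \<ge> 1 / x ^ (p+1) * (1 - a)"
    using ap x by (intro mult_left_mono) auto
  finally have "1 / x ^ (p+1) - 1 / (x+2) ^ (p+1) \<ge> 1 / x ^ (p+1) * (1 - a)" .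
  moreover have "1 - a = 2 / (x + 2)" using x by (simp add: a_def field_simps)
  moreover have "2 / (x + 2) \<ge> 2 / (3 * x)" using x by (intro divide_left_mono) auto
  ultimately have "1 / x ^ (p+1) - 1 / (x+2) ^ (p+1) \<ge> 1 / x ^ (p+1) * (2 / (3 * x))"
    by (smt (verit) mult_left_mono x zero_le_divide_1_iff zero_le_power)
  moreover have "1 / x ^ (p+1) * (2 / (3 * x)) = 2/3 * (1 / x ^ (p+2))" using x by (simp add: field_simps)
  ultimately have L: "2/3 * (1 / x ^ (p+2)) \<le> 1 / x ^ (p+1) - 1 / (x+2) ^ (p+1)" by metis
  have "1 / x ^ (p+2) \<le> 3/2 * (1 / x ^ (p+1) - 1 / (x+2) ^ (p+1))" using L by (rule aux_lin)
  then show ?thesis by (simp only: x_def)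
qed

lemma telescope:
  fixes E :: "nat \<Rightarrow> real"
  assumes lim: "E \<longlonglongrightarrow> 0"
    and d: "(\<lambda>n. E (n+2) - E n) \<in> O(\<lambda>n. 1 / real n ^ (p+2))"
  shows "E \<in> O(\<lambda>n. 1 / real n ^ (p+1))"
proof -
  from d obtain c where c: "c > 0"
    and ev: "eventually (\<lambda>n. norm (E (n+2) - E n) \<le> c * norm (1 / real n ^ (p+2))) sequentially"
    by (elim landau_o.bigE)
  from ev obtain n0 where n0: "\<And>n. n \<ge> n0 \<Longrightarrow> norm (E (n+2) - E n) \<le> c * norm (1 / real n ^ (p+2))"
    by (auto simp: eventually_sequentially)
  define n1 where "n1 = max n0 1"
  define u where "u = (\<lambda>n::nat. 1 / real n ^ (p+1))"
  have step: "\<bar>E (n+2) - E n\<bar> \<le> 3/2 * c * (u n - u (n+2))" if "n \<ge> n1" for n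
  proof -
    have "\<bar>E (n+2) - E n\<bar> \<le> c * (1 / real n ^ (p+2))" using n0[of n] that by (simp add: n1_def)
    also have "\<dots> \<le> c * (3/2 * (u n - u (n+2)))"
      using tele_ineq[of n p] that c by (intro mult_left_mono) (auto simp: n1_def u_def add.commute)
    finally show ?thesis by (simp add: algebra_simps)
  qed
  have tel: "\<bar>E n - E (n + 2*M)\<bar> \<le> 3/2 * c * (u n - u (n + 2*M))" if n: "n \<ge> n1" for n M
  proof (induction M)
    case 0 then show ?case by simp
  next
    case (Suc M)
    have "\<bar>E n - E (n + 2*Suc M)\<bar> \<le> \<bar>E n - E (n + 2*M)\<bar> + \<bar>E (n + 2*M + 2) - E (n + 2*M)\<bar>"
      by (simp add: algebra_simps)
    also have "\<dots> \<le> 3/2 * c * (u n - u (n + 2*M)) + 3/2 * c * (u (n+2*M) - u (n + 2*M + 2))"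
      using Suc step[of "n + 2*M"] n by (intro add_mono) auto
    also have "\<dots> = 3/2 * c * (u n - u (n + 2*Suc M))" by (simp add: algebra_simps)
    finally show ?case .
  qed
  have bound: "\<bar>E n\<bar> \<le> 3/2 * c * u n" if n: "n \<ge> n1" for n
  proof -
    have sm: "strict_mono (\<lambda>M::nat. n + 2*M)" by (rule strict_monoI) simp
    have "(\<lambda>M. E (n + 2*M)) \<longlonglongrightarrow> 0"
      using LIMSEQ_subseq_LIMSEQ[OF lim sm] by (simp add: o_def)
    then have "(\<lambda>M. \<bar>E n - E (n + 2*M)\<bar>) \<longlonglongrightarrow> \<bar>E n - 0\<bar>"
      by (intro tendsto_intros)
    moreover have "\<exists>N. \<forall>M\<ge>N. \<bar>E n - E (n + 2*M)\<bar> \<le> 3/2 * c * u n"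
    proof (intro exI allI impI)
      fix M
      have "\<bar>E n - E (n + 2*M)\<bar> \<le> 3/2 * c * (u n - u (n + 2*M))" using tel n by blast
      also have "\<dots> \<le> 3/2 * c * u n" using c by (intro mult_left_mono) (auto simp: u_def)
      finally show "\<bar>E n - E (n + 2*M)\<bar> \<le> 3/2 * c * u n" .
    qed
    ultimately have "\<bar>E n - 0\<bar> \<le> 3/2 * c * u n" by (rule LIMSEQ_le_const2)
    then show ?thesis by simp
  qed
  have "eventually (\<lambda>n. norm (E n) \<le> (3/2 * c) * norm (1 / real n ^ (p+1))) sequentially"
    using eventually_ge_at_top[of n1] by eventually_elim (use bound in \<open>auto simp: u_def\<close>)
  then show ?thesis by (rule bigoI)
qed



definition DNt :: "nat \<Rightarrow> real \<Rightarrow> real" where "DNt N t = (\<Sum>j\<le>N. dd j * t^j)"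
definition EE :: "nat \<Rightarrow> nat \<Rightarrow> real" where "EE N n = FF n - DNt N (1 / real n)"

lemma poly_lim: "(\<lambda>n. \<Sum>j\<le>N. a j * (1 / real n)^j) \<longlonglongrightarrow> a 0"
proof -
  have "(\<lambda>n. \<Sum>j\<le>N. a j * (1 / real n)^j) \<longlonglongrightarrow> (\<Sum>j\<le>N. a j * 0^j)"
    by (intro tendsto_intros inv_nat_tendsto)
  also have "(\<Sum>j\<le>N. a j * (0::real)^j) = (\<Sum>j\<le>N. if j = 0 then a j else 0)"
    by (intro sum.cong) auto
  also have "\<dots> = a 0" by (simp add: sum.delta')
  finally show ?thesis .
qed

lemma EE_lim: "EE N \<longlonglongrightarrow> 0"
proof -
  have "(\<lambda>n. FF n - DNt N (1 / real n)) \<longlonglongrightarrow> 1 - dd 0"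
    unfolding DNt_def by (intro tendsto_intros FF_lim poly_lim)
  then show ?thesis by (simp add: EE_def[abs_def] dd_def DF0)
qed

lemma ww_aux: "(y::real) > 0 \<Longrightarrow> (1 + 2 * (1/y)) * inverse (1 + 1/y) ^ 2 = y * (y + 2) / (y + 1)^2"
proof -
  assume y: "y > 0"
  have a: "1 + 2 * (1/y) = (y+2)/y" using y by (simp add: field_simps)
  have b: "inverse (1 + 1/y) = y/(y+1)" using y by (simp add: field_simps)
  have "(y+2)/y * (y/(y+1))^2 = ((y+2) * y) * y / (y * (y+1)^2)"
    by (simp add: power2_eq_square)
  also have "\<dots> = (y * (y+2)) / (y+1)^2" using y by (simp add: mult.commute)
  finally show ?thesis unfolding a b .
qed

lemma ww_val: "n \<ge> 1 \<Longrightarrow> ww (1 / real n) = real n * (real n + 2) / (real n + 1)^2"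
  unfolding ww_def by (rule ww_aux) simp

lemma phi_val: "n \<ge> 1 \<Longrightarrow> phi (1 / real n) = 1 / real (n + 2)"
  by (simp add: phi_def field_simps)

lemma EE_delta:
  assumes n: "n \<ge> 1"
  shows "EE N (n + 2) - EE N n = (ww (1 / real n) - 1) * EE N n + hh N (1 / real n)"
proof -
  have "EE N (n + 2) = FF (n + 2) - DNt N (1 / real (n + 2))" by (simp only: EE_def)
  also have "\<dots> = FF n * ww (1 / real n) - DNt N (phi (1 / real n))"
    by (simp only: FF_step[OF n] ww_val[OF n] phi_val[OF n])
  finally have "EE N (n + 2) = FF n * ww (1 / real n) - DNt N (phi (1 / real n))" .
  moreover have "hh N (1 / real n) = ww (1 / real n) * DNt N (1 / real n) - DNt N (phi (1 / real n))"
    by (simp add: hh_def DNt_def)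
  ultimately show ?thesis by (simp add: EE_def algebra_simps)
qed

lemma ww_bigo: "(\<lambda>n::nat. ww (1 / real n) - 1) \<in> O(\<lambda>n. 1 / real n ^ 2)"
  unfolding ww_def by real_asymp

lemma boot_step:
  assumes pre: "EE N \<in> O(\<lambda>n. 1 / real n ^ N)"
  shows "EE N \<in> O(\<lambda>n. 1 / real n ^ (N + 1))"
proof (rule telescope[OF EE_lim])
  have "(\<lambda>n. (ww (1 / real n) - 1) * EE N n) \<in> O(\<lambda>n. 1 / real n ^ 2 * (1 / real n ^ N))"
    by (intro landau_o.big.mult ww_bigo pre)
  also have "(\<lambda>n::nat. 1 / real n ^ 2 * (1 / real n ^ N)) = (\<lambda>n. 1 / real n ^ (N + 2))"
    by (rule ext) (simp only: times_divide_times_eq power_add mult_1_left mult.commute)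
  finally have A: "(\<lambda>n. (ww (1 / real n) - 1) * EE N n) \<in> O(\<lambda>n. 1 / real n ^ (N + 2))" .
  have B: "(\<lambda>n. (ww (1 / real n) - 1) * EE N n + hh N (1 / real n)) \<in> O(\<lambda>n. 1 / real n ^ (N + 2))"
    by (intro sum_in_bigo(1) A hh_bigo)
  have ev: "eventually (\<lambda>n. (ww (1 / real n) - 1) * EE N n + hh N (1 / real n) = EE N (n + 2) - EE N n) sequentially"
    using eventually_ge_at_top[of 1] by eventually_elim (rule EE_delta[symmetric])
  show "(\<lambda>n. EE N (n + 2) - EE N n) \<in> O(\<lambda>n. 1 / real n ^ (N + 2))"
    by (rule landau_o.big.in_cong[OF ev, THEN iffD1, OF B])
qed

lemma boot: "EE N \<in> O(\<lambda>n. 1 / real n ^ (N + 1))"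
proof (induction N)
  case 0
  have "EE 0 \<in> O(\<lambda>n. 1 / real n ^ 0)"
  proof (rule bigoI_tendsto[where c = 0])
    show "(\<lambda>n. EE 0 n / (1 / real n ^ 0)) \<longlonglongrightarrow> 0" using EE_lim[of 0] by simp
  qed simp
  then show ?case by (rule boot_step)
next
  case (Suc N)
  have e: "EE (Suc N) = (\<lambda>n. EE N n - dd (Suc N) * (1 / real n) ^ Suc N)"
    by (simp add: fun_eq_iff EE_def DNt_def algebra_simps)
  have t: "(\<lambda>n. dd (Suc N) * (1 / real n) ^ Suc N) \<in> O(\<lambda>n. 1 / real n ^ (Suc N))"
    by (rule bigoI[where c = "abs (dd (Suc N))"]) (simp add: power_one_over abs_mult)
  have "EE (Suc N) \<in> O(\<lambda>n. 1 / real n ^ Suc N)"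
    unfolding e using Suc.IH t by (intro sum_in_bigo(2)) simp_all
  then show ?case by (rule boot_step)
qed



lemma trunc_sq_coeffs: "\<forall>m < N + 1. (trunc N dd - trunc N cc ^ 2) $ m = 0"
proof (intro allI impI)
  fix m assume m: "m < N + 1"
  have "(trunc N cc ^ 2) $ m = (\<Sum>i=0..m. trunc N cc $ i * trunc N cc $ (m - i))"
    by (simp add: power2_eq_square fps_mult_nth)
  also have "\<dots> = (\<Sum>i=0..m. CF $ i * CF $ (m - i))"
    using m by (intro sum.cong refl) (auto simp: trunc_def CF_def)
  also have "\<dots> = dd m" by (simp add: dd_def DF_def fps_mult_nth)
  finally show "(trunc N dd - trunc N cc ^ 2) $ m = 0" using m by (simp add: trunc_def)
qed

lemma sq_bigo:
  "(\<lambda>n::nat. DNt N (1 / real n) - (\<Sum>j\<le>N. cc j * (1 / real n)^j) ^ 2) \<in> O(\<lambda>n. 1 / real n ^ (N + 1))"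
proof -
  have "(\<lambda>t::real. DNt N t - (\<Sum>j\<le>N. cc j * t^j) ^ 2) has_fps_expansion (trunc N dd - trunc N cc ^ 2)"
    unfolding DNt_def by (intro has_fps_expansion_diff poly_exp has_fps_expansion_power')
  from fps_bigo[OF this trunc_sq_coeffs] show ?thesis .
qed

theorem theorem8:
  fixes N :: nat
  shows "(\<lambda>n::nat. Omega (n - 1) / Omega n * sqrt (2 * pi / real n)
            - (\<Sum>j\<le>N. cc j / real n ^ j))
         \<in> O(\<lambda>n. 1 / real n ^ (N + 1))"
proof -
  define C where "C = (\<lambda>n::nat. \<Sum>j\<le>N. cc j * (1 / real n)^j)"
  have C_lim: "C \<longlonglongrightarrow> 1"
    unfolding C_def using poly_lim[of cc N] by simp
  have S: "(\<lambda>n. FF n - C n ^ 2) \<in> O(\<lambda>n. 1 / real n ^ (N + 1))"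
  proof -
    have "(\<lambda>n. EE N n + (DNt N (1 / real n) - C n ^ 2)) \<in> O(\<lambda>n. 1 / real n ^ (N + 1))"
      unfolding C_def by (intro sum_in_bigo(1) boot sq_bigo)
    moreover have "(\<lambda>n. EE N n + (DNt N (1 / real n) - C n ^ 2)) = (\<lambda>n. FF n - C n ^ 2)"
      by (simp add: fun_eq_iff EE_def)
    ultimately show ?thesis by simp
  qed
  have lim2: "(\<lambda>n. fN n + C n) \<longlonglongrightarrow> 2"
    using tendsto_add[OF fN_lim C_lim] by simp
  have I: "(\<lambda>n. 1 / (fN n + C n)) \<in> O(\<lambda>_. 1)"
  proof (rule bigoI_tendsto[where c = "1/2"])
    show "(\<lambda>n. 1 / (fN n + C n) / 1) \<longlonglongrightarrow> 1/2"
      using tendsto_divide[OF tendsto_const lim2, of 1] by simp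
  qed simp
  have P: "(\<lambda>n. (FF n - C n ^ 2) * (1 / (fN n + C n))) \<in> O(\<lambda>n. 1 / real n ^ (N + 1) * 1)"
    by (rule landau_o.big.mult[OF S I])
  have pos: "eventually (\<lambda>n. 0 < fN n + C n) sequentially"
    using lim2 by (rule order_tendstoD) simp
  have ev: "eventually (\<lambda>n. (FF n - C n ^ 2) * (1 / (fN n + C n)) =
      Omega (n - 1) / Omega n * sqrt (2 * pi / real n) - (\<Sum>j\<le>N. cc j / real n ^ j)) sequentially"
    using pos
  proof eventually_elim
    case (elim n)
    have f: "FF n - C n ^ 2 = (fN n - C n) * (fN n + C n)"
      by (simp add: FF_def power2_eq_square algebra_simps)
    have "(FF n - C n ^ 2) * (1 / (fN n + C n)) = (fN n - C n) * ((fN n + C n) * (1 / (fN n + C n)))"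
      unfolding f by (simp only: mult.assoc)
    also have "\<dots> = fN n - C n" using elim by simp
    also have "\<dots> = Omega (n - 1) / Omega n * sqrt (2 * pi / real n) - (\<Sum>j\<le>N. cc j / real n ^ j)"
      by (simp add: fN_def C_def power_one_over)
    finally show ?case .
  qed
  show ?thesis using landau_o.big.in_cong[OF ev, THEN iffD1, OF P] by simp
qed


end
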